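(* Call a butterfly partition of $n$ a partition of $n$ into distinct parts $p_1>p_2>\dots>p_k$ with $k\ge 3$, $p_1=p_2+1=p_3+2$ and $p_k\ge 2$. For $n\ge 6$ let $s_e(n)$ (resp. $s_o(n)$) be the number of butterfly partitions of $n$ whose second largest part $p_2$ is even (resp. odd), and let $s(n)=q(n)-2q(n-1)+q(n-2)$, where $q(m)$ is the number of partitions of $m$ into distinct parts ($q(0)=1$, $q(m)=0$ for $m<0$). For a positive integer $N$, write $\pi(N)$ for the largest power of $2$ that is $\le N$. (a) For $n\ge 6$ let $o_e(n)$ be the number of partitions $q_1\ge q_2\ge\dots\ge q_r$ of $n$ with all parts odd and $\ge 3$, $r\ge 4$, $q_2=q_3$, $q_r=3$, and $q_3>q_4$ unless $q_2=q_3=q_4=3$, which satisfy the following conditions, where $t=(q_1-q_2)/2$, for each odd integer $q\neq 3$ $u(q)$ is the number of indices $j\in\{4,\dots,r\}$ with $q_j=q$, and $v$ is the number of indices $j\in\{4,\dots,r-1\}$ with $q_j=3$: (i) if $t>0$ then $2\,\pi(t)\le q_3-1$; (ii) for every odd $q\ne 3$ with $u(q)>0$, $q\,\pi(u(q))\le q_3-1$; (iii) if $v>0$ then $3\,\pi(v)\le q_3-1$. Then $o_e(n)=s_e(n)$ for all $n\ge 6$. (b) For $n\ge 6$ let $o_o(n)$ be the number of partitions of $n$ which are either the partition $3=3=3$ (when $n=9$), or of the form $q_1>q_2>q_3=q_2-2\ge q_4\ge\dots\ge q_r\ge 3$ with all parts odd, $r\ge 3$ and $q_1-q_2\ge 2$,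 satisfying the following conditions, where $t=(q_1-q_2-2)/2$, for each odd integer $q\ne 3$ $u(q)$ is the number of indices $j\in\{4,\dots,r\}$ with $q_j=q$, and $v$ is the number of indices $j\in\{4,\dots,r\}$ with $q_j=3$: (i) if $t>0$ then $2\,\pi(t)\le q_3$; (ii) for every odd $q\neq 3$ with $u(q)>0$, $q\,\pi(u(q))\le q_3$; (iii) if $v>0$ then $3\,\pi(v)\le q_3$. Then $o_o(n)=s_o(n)$ for all $n\ge 6$. (c) For all $n\ge 6$, $o_e(n)+o_o(n)=s(n)$.
   Context: $q(m)$ counts partitions of $m$ into distinct parts. In conditions (i)–(iii) a condition is vacuous when the corresponding quantity $t$, $u(q)$ or $v$ is zero. *)

theory Defs
  imports Main
begin

text \<open>Partitions are represented as lists of parts listed in weakly (or strictly)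
  decreasing order; list index j (0-based) corresponds to the part q_{j+1}.\<close>

definition qd :: "nat \<Rightarrow> nat" where
  "qd m = card {xs :: nat list. sorted_wrt (>) xs \<and> 0 \<notin> set xs \<and> sum_list xs = m}"

definition s :: "nat \<Rightarrow> int" where
  "s n = int (qd n) - 2 * int (qd (n - 1)) + int (qd (n - 2))"

definition butterfly :: "nat \<Rightarrow> nat list \<Rightarrow> bool" where
  "butterfly n p \<longleftrightarrow> sorted_wrt (>) p \<and> length p \<ge> 3 \<and> sum_list p = n \<and>
     p!0 = p!1 + 1 \<and> p!1 = p!2 + 1 \<and> last p \<ge> 2"

definition s_e :: "nat \<Rightarrow> nat" where
  "s_e n = card {p. butterfly n p \<and> even (p!1)}"

definition s_o :: "nat \<Rightarrow> nat" where
  "s_o n = card {p. butterfly n p \<and> odd (p!1)}"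

definition pi2 :: "nat \<Rightarrow> nat" where
  "pi2 N = (GREATEST p. (\<exists>k. p = 2 ^ k) \<and> p \<le> N)"

definition mult_in :: "nat list \<Rightarrow> nat \<Rightarrow> nat \<Rightarrow> nat \<Rightarrow> nat" where
  "mult_in qs a b x = card {j. a \<le> j \<and> j \<le> b \<and> qs!(j - 1) = x}"

definition oe_part :: "nat \<Rightarrow> nat list \<Rightarrow> bool" where
  "oe_part n qs \<longleftrightarrow>
     (let r = length qs; q1 = qs!0; q2 = qs!1; q3 = qs!2; q4 = qs!3;
          t = (q1 - q2) div 2;
          u = (\<lambda>x. mult_in qs 4 r x);
          v = mult_in qs 4 (r - 1) 3
      in sorted_wrt (\<ge>) qs \<and> sum_list qs = n \<and>
         (\<forall>x\<in>set qs. odd x \<and> x \<ge> 3) \<and> r \<ge> 4 \<and> q2 = q3 \<and> last qs = 3 \<and>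
         (q3 > q4 \<or> (q2 = 3 \<and> q3 = 3 \<and> q4 = 3)) \<and>
         (t > 0 \<longrightarrow> 2 * pi2 t \<le> q3 - 1) \<and>
         (\<forall>x. odd x \<and> x \<noteq> 3 \<and> u x > 0 \<longrightarrow> x * pi2 (u x) \<le> q3 - 1) \<and>
         (v > 0 \<longrightarrow> 3 * pi2 v \<le> q3 - 1))"

definition o_e :: "nat \<Rightarrow> nat" where
  "o_e n = card {qs. oe_part n qs}"

definition oo_part :: "nat \<Rightarrow> nat list \<Rightarrow> bool" where
  "oo_part n qs \<longleftrightarrow>
     (qs = [3, 3, 3] \<and> n = 9) \<or>
     (let r = length qs; q1 = qs!0; q2 = qs!1; q3 = qs!2;
          t = (q1 - q2 - 2) div 2;
          u = (\<lambda>x. mult_in qs 4 r x);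
          v = mult_in qs 4 r 3
      in r \<ge> 3 \<and> sum_list qs = n \<and> (\<forall>x\<in>set qs. odd x \<and> x \<ge> 3) \<and>
         q1 > q2 \<and> q2 \<ge> 2 \<and> q3 = q2 - 2 \<and> sorted_wrt (\<ge>) (drop 2 qs) \<and>
         q1 - q2 \<ge> 2 \<and>
         (t > 0 \<longrightarrow> 2 * pi2 t \<le> q3) \<and>
         (\<forall>x. odd x \<and> x \<noteq> 3 \<and> u x > 0 \<longrightarrow> x * pi2 (u x) \<le> q3) \<and>
         (v > 0 \<longrightarrow> 3 * pi2 v \<le> q3))"

definition o_o :: "nat \<Rightarrow> nat" where
  "o_o n = card {qs. oo_part n qs}"

end

theory Submission
  imports Defs "HOL-Library.Multiset"
begin


lemma sum_pow2_lt: "(\<Sum>i<b. (2::nat)^i) < 2^b"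
  by (induction b) auto

lemma sum_pow2_subset_lt:
  assumes "finite A" "\<forall>a\<in>A. a < b"
  shows "(\<Sum>i\<in>A. (2::nat)^i) < 2^b"
proof -
  have "(\<Sum>i\<in>A. (2::nat)^i) \<le> (\<Sum>i<b. 2^i)"
    using assms by (intro sum_mono2) auto
  with sum_pow2_lt[of b] show ?thesis by linarith
qed

lemma bit_lt_pow: "(r::nat) < 2^b \<Longrightarrow> bit r j \<Longrightarrow> j < b"
  by (metis bit_take_bit_iff take_bit_nat_eq_self_iff)

lemma bit_sum_pow2:
  assumes "finite S"
  shows "bit (\<Sum>i\<in>S. (2::nat)^i) j \<longleftrightarrow> j \<in> S"
  using assms
proof (induction S rule: finite_linorder_max_induct)
  case empty
  then show ?case by simp
next
  case (insert b A)
  have lt: "(\<Sum>i\<in>A. (2::nat)^i) < 2^b" using insert sum_pow2_subset_lt by blast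
  have nb: "b \<notin> A" using insert by auto
  have eq: "(\<Sum>i\<in>insert b A. (2::nat)^i) = 2^b + (\<Sum>i\<in>A. 2^i)"
    using insert nb by simp
  have disj: "\<And>n. \<not> bit ((2::nat)^b) n \<or> \<not> bit (\<Sum>i\<in>A. (2::nat)^i) n"
    using bit_lt_pow[OF lt] by (auto simp: bit_exp_iff)
  show ?case unfolding eq bit_disjunctive_add_iff[OF disj]
    using insert by (auto simp: bit_exp_iff)
qed

lemma bit_imp_pow_le: "bit (c::nat) i \<Longrightarrow> 2^i \<le> c"
  by (cases "c < 2^i") (auto simp: bit_iff_odd)

lemma finite_bits: "finite {i. bit (c::nat) i}"
proof -
  have "x < c" if "bit c x" for x using bit_imp_pow_le[OF that] less_exp[of x] by linarith
  then have "{i. bit c i} \<subseteq> {..<c}" by auto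
  then show ?thesis using finite_subset by blast
qed

lemma sum_bits: "(\<Sum>i\<in>{i. bit c i}. (2::nat)^i) = c"
  by (rule bit_eqI) (simp add: bit_sum_pow2[OF finite_bits])


fun v2 :: "nat \<Rightarrow> nat" where
  "v2 y = (if y = 0 \<or> odd y then 0 else Suc (v2 (y div 2)))"

declare v2.simps[simp del]

lemma v2_0: "v2 0 = 0" by (subst v2.simps) simp
lemma v2_odd: "odd y \<Longrightarrow> v2 y = 0" by (subst v2.simps) simp
lemma v2_even: "y \<noteq> 0 \<Longrightarrow> even y \<Longrightarrow> v2 y = Suc (v2 (y div 2))" by (subst v2.simps) simp

definition oddpart :: "nat \<Rightarrow> nat" where
  "oddpart y = y div 2 ^ v2 y"

lemma v2_decomp: "y > 0 \<Longrightarrow> odd (oddpart y) \<and> oddpart y * 2 ^ v2 y = y"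
proof (induction y rule: v2.induct)
  case (1 y)
  show ?case
  proof (cases "odd y")
    case True
    then show ?thesis by (simp add: oddpart_def v2_odd)
  next
    case False
    then have y2: "y div 2 > 0" using 1(2) by (auto elim!: evenE)
    have IH: "odd (oddpart (y div 2)) \<and> oddpart (y div 2) * 2 ^ v2 (y div 2) = y div 2"
      using 1 False y2 by auto
    have v: "v2 y = Suc (v2 (y div 2))" using False 1(2) by (simp add: v2_even)
    have o: "oddpart y = oddpart (y div 2)"
      unfolding oddpart_def v by (simp add: div_mult2_eq)
    have "y = 2 * (y div 2)" using False by simp
    then show ?thesis using IH False unfolding o v by (metis mult.left_commute power_Suc)
  qed
qed

lemma v2_mult: "odd x \<Longrightarrow> v2 (x * 2 ^ i) = i \<and> oddpart (x * 2 ^ i) = x"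
proof (induction i)
  case 0
  then show ?case by (simp add: v2_odd oddpart_def)
next
  case (Suc i)
  have "x > 0" using Suc.prems by (metis odd_pos)
  have ne: "x * 2 ^ Suc i \<noteq> 0" "even (x * 2 ^ Suc i)" using Suc \<open>x > 0\<close> by auto
  have d: "x * 2 ^ Suc i div 2 = x * 2 ^ i" by simp
  have v: "v2 (x * 2 ^ Suc i) = Suc i"
    using v2_even[OF ne] d Suc by simp
  then show ?case by (simp add: oddpart_def)
qed

definition glaisher :: "nat set \<Rightarrow> nat multiset" where
  "glaisher D = (\<Sum>y\<in>D. replicate_mset (2 ^ v2 y) (oddpart y))"

definition unglaisher :: "nat multiset \<Rightarrow> nat set" where
  "unglaisher M = {x * 2 ^ i | x i. odd x \<and> bit (count M x) i}"

lemma count_glaisher_odd: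
  assumes "finite D" "0 \<notin> D" "odd x"
  shows "count (glaisher D) x = (\<Sum>i\<in>{i. x * 2 ^ i \<in> D}. 2 ^ i)"
proof -
  have Seq: "{y\<in>D. oddpart y = x} = (\<lambda>i. x * 2 ^ i) ` {i. x * 2 ^ i \<in> D}"
  proof (intro equalityI subsetI)
    fix y assume "y \<in> {y\<in>D. oddpart y = x}"
    then have "y \<in> D" "oddpart y = x" by auto
    then have "y = x * 2 ^ v2 y" using v2_decomp[of y] assms by (metis neq0_conv)
    then show "y \<in> (\<lambda>i. x * 2 ^ i) ` {i. x * 2 ^ i \<in> D}" using \<open>y \<in> D\<close> by force
  next
    fix y assume "y \<in> (\<lambda>i. x * 2 ^ i) ` {i. x * 2 ^ i \<in> D}"
    then show "y \<in> {y\<in>D. oddpart y = x}" using v2_mult[OF assms(3)] by auto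
  qed
  have "count (glaisher D) x = (\<Sum>y\<in>D. if oddpart y = x then 2 ^ v2 y else 0)"
    unfolding glaisher_def count_sum by (intro sum.cong) auto
  also have "\<dots> = (\<Sum>y\<in>{y\<in>D. oddpart y = x}. 2 ^ v2 y)"
    using assms by (simp add: sum.inter_filter)
  also have "\<dots> = (\<Sum>y\<in>(\<lambda>i. x * 2 ^ i) ` {i. x * 2 ^ i \<in> D}. 2 ^ v2 y)" by (simp only: Seq)
  also have "\<dots> = (\<Sum>i\<in>{i. x * 2 ^ i \<in> D}. 2 ^ i)"
  proof -
    have "x > 0" using assms by (metis odd_pos)
    then have inj: "inj_on (\<lambda>i. x * 2 ^ i) {i. x * 2 ^ i \<in> D}" by (auto simp: inj_on_def)
    show ?thesis using v2_mult[OF assms(3)] by (simp add: sum.reindex[OF inj])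
  qed
  finally show ?thesis .
qed

lemma finite_pow_set:
  assumes "finite D" "odd (x::nat)"
  shows "finite {i. x * 2 ^ i \<in> D}"
proof -
  have "x > 0" using assms by (metis odd_pos)
  then have "inj (\<lambda>i. x * 2 ^ i)" by (auto simp: inj_on_def)
  then show ?thesis using finite_vimageI[OF assms(1)] by (simp add: vimage_def)
qed

lemma count_glaisher_even:
  assumes "finite D" "0 \<notin> D" "even x"
  shows "count (glaisher D) x = 0"
proof -
  have "count (glaisher D) x = (\<Sum>y\<in>D. if oddpart y = x then 2 ^ v2 y else 0)"
    unfolding glaisher_def count_sum by (intro sum.cong) auto
  also have "\<dots> = 0" using assms v2_decomp by (intro sum.neutral) (metis neq0_conv)
  finally show ?thesis .
qed

lemma bits_glaisher:
  assumes "finite D" "0 \<notin> D" "odd x"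
  shows "bit (count (glaisher D) x) i \<longleftrightarrow> x * 2 ^ i \<in> D"
  unfolding count_glaisher_odd[OF assms] using bit_sum_pow2[OF finite_pow_set[OF assms(1,3)]] by simp

lemma unglaisher_glaisher:
  assumes "finite D" "0 \<notin> D"
  shows "unglaisher (glaisher D) = D"
proof (intro equalityI subsetI)
  fix y assume "y \<in> unglaisher (glaisher D)"
  then obtain x i where y: "y = x * 2 ^ i" "odd x" "bit (count (glaisher D) x) i"
    unfolding unglaisher_def by blast
  then show "y \<in> D" using bits_glaisher[OF assms y(2)] by simp
next
  fix y assume y: "y \<in> D"
  then have "y > 0" using assms by (metis neq0_conv)
  then have o: "odd (oddpart y)" and e: "y = oddpart y * 2 ^ v2 y" using v2_decomp by auto
  have "bit (count (glaisher D) (oddpart y)) (v2 y)"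
    using bits_glaisher[OF assms o] e y by simp
  then show "y \<in> unglaisher (glaisher D)"
    unfolding unglaisher_def using o e by blast
qed

lemma sum_glaisher:
  assumes "finite D"
  shows "sum_mset (glaisher D) = \<Sum>D"
proof -
  have "sum_mset (glaisher D) = (\<Sum>y\<in>D. sum_mset (replicate_mset (2 ^ v2 y) (oddpart y)))"
    unfolding glaisher_def using assms by (induction D rule: finite_induct) auto
  also have "\<dots> = (\<Sum>y\<in>D. y)"
  proof (intro sum.cong refl)
    fix y assume "y \<in> D"
    show "sum_mset (replicate_mset (2 ^ v2 y) (oddpart y)) = y"
    proof (cases "y = 0")
      case True
      then show ?thesis by (simp add: oddpart_def)
    next
      case False
      then show ?thesis using v2_decomp[of y] by (simp add: mult.commute)
    qed
  qed
  finally show ?thesis by simp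
qed


lemma pi2_eq:
  assumes "2 ^ k \<le> c" "c < 2 ^ (k + 1)"
  shows "pi2 c = 2 ^ k"
  unfolding pi2_def
proof (rule Greatest_equality)
  show "(\<exists>j. (2::nat) ^ k = 2 ^ j) \<and> 2 ^ k \<le> c" using assms by auto
  fix p assume "(\<exists>j. p = (2::nat) ^ j) \<and> p \<le> c"
  then obtain j where j: "p = 2 ^ j" "p \<le> c" by auto
  then have "(2::nat) ^ j < 2 ^ (k + 1)" using assms by linarith
  then have "j < k + 1" using power_less_imp_less_exp[of "2::nat" j "k+1"] by linarith
  then have "j \<le> k" by simp
  then show "p \<le> 2 ^ k" using j by simp
qed

lemma pi2_ex:
  assumes "c > 0"
  obtains k where "pi2 c = 2 ^ k" "2 ^ k \<le> c" "c < 2 ^ (k + 1)"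
  using ex_power_ivl1[of 2 c] assms pi2_eq by fastforce

lemma pi2_double: "t > 0 \<Longrightarrow> pi2 (2 * t) = 2 * pi2 t"
proof -
  assume "t > 0"
  then obtain k where k: "pi2 t = 2 ^ k" "2 ^ k \<le> t" "t < 2 ^ (k + 1)" by (rule pi2_ex)
  have "pi2 (2 * t) = 2 ^ (k + 1)" using k by (intro pi2_eq) auto
  then show ?thesis using k by simp
qed

lemma bit_le_pi2:
  assumes "bit c i"
  shows "2 ^ i \<le> pi2 c"
proof -
  have "2 ^ i \<le> c" using bit_imp_pow_le[OF assms] .
  moreover have "(0::nat) < 2 ^ i" by simp
  ultimately have "c > 0" by linarith
  then obtain k where k: "pi2 c = 2 ^ k" "2 ^ k \<le> c" "c < 2 ^ (k + 1)" by (rule pi2_ex)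
  then have "(2::nat) ^ i < 2 ^ (k + 1)" using \<open>2 ^ i \<le> c\<close> by linarith
  then have "i < k + 1" using power_less_imp_less_exp[of "2::nat" i "k+1"] by linarith
  then have "i \<le> k" by simp
  then show ?thesis using k by simp
qed

lemma pi2_sum_pow2:
  assumes "finite S" "S \<noteq> {}"
  shows "pi2 (\<Sum>i\<in>S. (2::nat)^i) = 2 ^ Max S"
proof (rule pi2_eq)
  have "Max S \<in> S" using assms by simp
  then show "2 ^ Max S \<le> (\<Sum>i\<in>S. (2::nat)^i)"
    using assms by (intro member_le_sum) auto
  have "\<forall>a\<in>S. a < Max S + 1" using assms by (simp add: le_imp_less_Suc)
  then show "(\<Sum>i\<in>S. (2::nat)^i) < 2 ^ (Max S + 1)"
    using sum_pow2_subset_lt assms by blast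
qed

definition goodM :: "nat \<Rightarrow> nat multiset \<Rightarrow> bool" where
  "goodM B M \<longleftrightarrow> (\<forall>x\<in>#M. odd x) \<and> even (count M 1) \<and>
     (\<forall>x. 0 < count M x \<longrightarrow> x * pi2 (count M x) \<le> B)"

lemma glaisher_good:
  assumes "D \<subseteq> {2..B}"
  shows "goodM B (glaisher D)"
proof -
  have fin: "finite D" using assms finite_subset by blast
  have z: "0 \<notin> D" using assms by auto
  have A: "\<forall>x\<in>#glaisher D. odd x"
  proof
    fix x assume "x \<in># glaisher D"
    then have c: "count (glaisher D) x \<noteq> 0" by simp
    show "odd x"
    proof (rule ccontr)
      assume "\<not> odd x"
      then have "count (glaisher D) x = 0" using count_glaisher_even[OF fin z] by simp
      then have "x \<notin># glaisher D" by (simp add: not_in_iff)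
      with \<open>x \<in># glaisher D\<close> show False by simp
    qed
  qed
  have "count (glaisher D) 1 = (\<Sum>i\<in>{i. 1 * 2 ^ i \<in> D}. 2 ^ i)"
    using count_glaisher_odd[OF fin z] by simp
  moreover have "even (\<Sum>i\<in>{i. 1 * 2 ^ i \<in> D}. (2::nat) ^ i)"
  proof (rule dvd_sum)
    fix i assume "i \<in> {i. 1 * 2 ^ i \<in> D}"
    then have "i \<noteq> 0" using assms by (cases i) auto
    then show "even ((2::nat) ^ i)" by simp
  qed
  ultimately have B1: "even (count (glaisher D) 1)" by simp
  have C: "x * pi2 (count (glaisher D) x) \<le> B" if "0 < count (glaisher D) x" for x
  proof -
    have ox: "odd x"
    proof (rule ccontr)
      assume "\<not> odd x"
      then have "count (glaisher D) x = 0" using count_glaisher_even[OF fin z] by simp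
      with that show False by simp
    qed
    let ?S = "{i. x * 2 ^ i \<in> D}"
    have cnt: "count (glaisher D) x = (\<Sum>i\<in>?S. 2 ^ i)" using count_glaisher_odd[OF fin z ox] .
    have fS: "finite ?S" using finite_pow_set[OF fin ox] .
    have ne: "?S \<noteq> {}"
    proof
      assume "?S = {}"
      then have "count (glaisher D) x = 0" using cnt by simp
      with that show False by simp
    qed
    have "pi2 (count (glaisher D) x) = 2 ^ Max ?S" using cnt pi2_sum_pow2[OF fS ne] by simp
    moreover have "Max ?S \<in> ?S" using fS ne by (rule Max_in)
    then have "x * 2 ^ Max ?S \<in> D" by simp
    ultimately show ?thesis using assms by auto
  qed
  show ?thesis unfolding goodM_def using A B1 C by blast
qed

lemma unglaisher_sub:
  assumes "goodM B M"
  shows "unglaisher M \<subseteq> {2..B}"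
proof
  fix y assume "y \<in> unglaisher M"
  then obtain x i where y: "y = x * 2 ^ i" "odd x" "bit (count M x) i"
    unfolding unglaisher_def by auto
  have "(0::nat) < 2 ^ i" by simp
  then have pos: "0 < count M x" using bit_imp_pow_le[OF y(3)] by linarith
  have "2 ^ i \<le> pi2 (count M x)" using bit_le_pi2[OF y(3)] .
  then have "x * 2 ^ i \<le> x * pi2 (count M x)" by simp
  also have "\<dots> \<le> B" using assms pos unfolding goodM_def by blast
  finally have le: "y \<le> B" using y by simp
  have "2 \<le> y"
  proof (cases "x = 1")
    case True
    have "even (count M 1)" using assms unfolding goodM_def by blast
    then have "i \<noteq> 0" using y True by (cases i) (simp_all add: bit_0)
    then have "2 \<le> (2::nat) ^ i" by (cases i) auto
    then show ?thesis using y True by simp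
  next
    case False
    then have x3: "x \<ge> 3" using y(2) by presburger
    have "1 \<le> (2::nat) ^ i" by simp
    then have "x * 1 \<le> x * 2 ^ i" by (rule mult_le_mono2)
    then have le: "x \<le> x * 2 ^ i" by simp
    show ?thesis using y x3 le by linarith
  qed
  then show "y \<in> {2..B}" using le by simp
qed

lemma glaisher_unglaisher:
  assumes "goodM B M"
  shows "glaisher (unglaisher M) = M"
proof (rule multiset_eqI)
  fix x
  have sub: "unglaisher M \<subseteq> {2..B}" using unglaisher_sub[OF assms] .
  have fin: "finite (unglaisher M)" using sub finite_subset by blast
  have z: "0 \<notin> unglaisher M" using sub by auto
  show "count (glaisher (unglaisher M)) x = count M x"
  proof (cases "odd x")
    case True
    have "{i. x * 2 ^ i \<in> unglaisher M} = {i. bit (count M x) i}"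
    proof (intro equalityI subsetI)
      fix i assume "i \<in> {i. x * 2 ^ i \<in> unglaisher M}"
      then obtain x' i' where e: "x * 2 ^ i = x' * 2 ^ i'" "odd x'" "bit (count M x') i'"
        unfolding unglaisher_def by auto
      have "x' = x \<and> i' = i" using v2_mult[OF True, of i] v2_mult[OF e(2), of i'] e(1) by metis
      then show "i \<in> {i. bit (count M x) i}" using e by simp
    next
      fix i assume "i \<in> {i. bit (count M x) i}"
      then show "i \<in> {i. x * 2 ^ i \<in> unglaisher M}" unfolding unglaisher_def using True by auto
    qed
    then show ?thesis using count_glaisher_odd[OF fin z True] sum_bits by simp
  next
    case False
    then have "x \<notin># M" using assms unfolding goodM_def by auto
    then have "count M x = 0" by (simp add: not_in_iff)
    then show ?thesis using count_glaisher_even[OF fin z] False by simp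
  qed
qed


lemma sorted_dec_last: "sorted_wrt (>) (xs::nat list) \<Longrightarrow> x \<in> set xs \<Longrightarrow> last xs \<le> x"
proof (induction xs)
  case Nil then show ?case by simp
next
  case (Cons y ys)
  show ?case
  proof (cases "ys = []")
    case True then show ?thesis using Cons by simp
  next
    case False
    have ly: "last ys \<in> set ys" using False by simp
    have sy: "sorted_wrt (>) ys" "\<forall>z\<in>set ys. z < y" using Cons.prems by auto
    have e: "last (y # ys) = last ys" using False by simp
    show ?thesis
    proof (cases "x = y")
      case True then show ?thesis using e ly sy by fastforce
    next
      case False then show ?thesis using e Cons.IH sy Cons.prems by auto
    qed
  qed
qed

lemma dec_distinct: "sorted_wrt (>) (xs::nat list) \<Longrightarrow> distinct xs"
  by (induction xs) auto

lemma dec_set_list: "sorted_wrt (>) (xs::nat list) \<Longrightarrow> rev (sorted_list_of_set (set xs)) = xs"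
proof -
  assume a: "sorted_wrt (>) xs"
  then have "sorted_wrt (<) (rev xs)" by (simp add: sorted_wrt_rev)
  then have "sorted (rev xs)" "distinct (rev xs)" by (auto simp: strict_sorted_iff)
  then have "sorted_list_of_set (set (rev xs)) = rev xs" by (rule sorted_list_of_set.idem_if_sorted_distinct)
  then show ?thesis by simp
qed

lemma list_set_dec:
  assumes "finite D"
  shows "sorted_wrt (>) (rev (sorted_list_of_set D))" "set (rev (sorted_list_of_set D)) = D"
    "sum_list (rev (sorted_list_of_set D)) = \<Sum>D"
proof -
  have d: "distinct (sorted_list_of_set D)" by simp
  show "sorted_wrt (>) (rev (sorted_list_of_set D))"
    using strict_sorted_list_of_set[of D] by (simp add: sorted_wrt_rev)
  show "set (rev (sorted_list_of_set D)) = D" using assms by simp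
  show "sum_list (rev (sorted_list_of_set D)) = \<Sum>D"
    using sum_list_distinct_conv_sum_set[OF d, of "\<lambda>x. x"] assms by simp
qed

definition BX :: "(nat \<Rightarrow> bool) \<Rightarrow> nat \<Rightarrow> (nat \<times> nat set) set" where
  "BX P n = {(a, D). a \<ge> 3 \<and> P a \<and> D \<subseteq> {2..a-2} \<and> 3 * a + \<Sum>D = n}"

definition BY :: "(nat \<Rightarrow> bool) \<Rightarrow> nat \<Rightarrow> (nat \<times> nat multiset) set" where
  "BY P n = {(a, M). a \<ge> 3 \<and> P a \<and> goodM (a-2) M \<and> 3 * a + sum_mset M = n}"

lemma card_BX_BY: "card (BX P n) = card (BY P n)"
proof (rule bij_betw_same_card)
  show "bij_betw (\<lambda>(a, D). (a, glaisher D)) (BX P n) (BY P n)"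
  proof (rule bij_betw_byWitness[where f' = "\<lambda>(a, M). (a, unglaisher M)"])
    show "\<forall>x\<in>BX P n. (\<lambda>(a, M). (a, unglaisher M)) ((\<lambda>(a, D). (a, glaisher D)) x) = x"
    proof
      fix x assume "x \<in> BX P n"
      then obtain a D where x: "x = (a, D)" "D \<subseteq> {2..a-2}" unfolding BX_def by auto
      then have "finite D" "0 \<notin> D" using finite_subset by auto
      then show "(\<lambda>(a, M). (a, unglaisher M)) ((\<lambda>(a, D). (a, glaisher D)) x) = x"
        using x unglaisher_glaisher by simp
    qed
    show "\<forall>y\<in>BY P n. (\<lambda>(a, D). (a, glaisher D)) ((\<lambda>(a, M). (a, unglaisher M)) y) = y"
      unfolding BY_def using glaisher_unglaisher by auto
    show "(\<lambda>(a, D). (a, glaisher D)) ` BX P n \<subseteq> BY P n"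
    proof
      fix y assume "y \<in> (\<lambda>(a, D). (a, glaisher D)) ` BX P n"
      then obtain a D where y: "y = (a, glaisher D)" "a \<ge> 3" "P a" "D \<subseteq> {2..a-2}" "3 * a + \<Sum>D = n"
        unfolding BX_def by auto
      then have "finite D" using finite_subset by auto
      then show "y \<in> BY P n" unfolding BY_def using y glaisher_good sum_glaisher by auto
    qed
    show "(\<lambda>(a, M). (a, unglaisher M)) ` BY P n \<subseteq> BX P n"
    proof
      fix y assume "y \<in> (\<lambda>(a, M). (a, unglaisher M)) ` BY P n"
      then obtain a M where y: "y = (a, unglaisher M)" "a \<ge> 3" "P a" "goodM (a-2) M" "3 * a + sum_mset M = n"
        unfolding BY_def by auto
      have sub: "unglaisher M \<subseteq> {2..a-2}" using unglaisher_sub[OF y(4)] .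
      then have "finite (unglaisher M)" using finite_subset by auto
      then have "\<Sum>(unglaisher M) = sum_mset M"
        using sum_glaisher glaisher_unglaisher[OF y(4)] by metis
      then show "y \<in> BX P n" unfolding BX_def using y sub by auto
    qed
  qed
qed


lemma butterfly_struct:
  assumes "butterfly n p"
  shows "p = (p!1 + 1) # p!1 # (p!1 - 1) # drop 3 p" "p!1 \<ge> 3"
    "drop 3 p \<noteq> [] \<longrightarrow> 2 \<le> last (drop 3 p)"
    "\<forall>x\<in>set (drop 3 p). 2 \<le> x \<and> x \<le> p!1 - 2"
    "sorted_wrt (>) (drop 3 p)" "n = 3 * p!1 + sum_list (drop 3 p)"
proof -
  from assms have len: "length p \<ge> 3" unfolding butterfly_def by simp
  then obtain a b c R where p: "p = a # b # c # R"
    by (metis Suc_le_length_iff numeral_3_eq_3)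
  have s: "sorted_wrt (>) p" "p!0 = p!1 + 1" "p!1 = p!2 + 1" "last p \<ge> 2" "sum_list p = n"
    using assms unfolding butterfly_def by auto
  have allge: "\<forall>x\<in>set p. 2 \<le> x" using sorted_dec_last[OF s(1)] s(4) by fastforce
  have "c \<ge> 2" using allge p by simp
  then show "p!1 \<ge> 3" using s p by simp
  show "p = (p!1 + 1) # p!1 # (p!1 - 1) # drop 3 p" using p s by simp
  show "drop 3 p \<noteq> [] \<longrightarrow> 2 \<le> last (drop 3 p)" using allge p by simp
  show "\<forall>x\<in>set (drop 3 p). 2 \<le> x \<and> x \<le> p!1 - 2" using allge p s by fastforce
  show "sorted_wrt (>) (drop 3 p)" using s p by simp
  show "n = 3 * p!1 + sum_list (drop 3 p)" using s p by simp
qed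

lemma butterfly_build:
  assumes "a \<ge> 3" "D \<subseteq> {2..a-2}" "3 * a + \<Sum>D = n"
  shows "butterfly n ((a + 1) # a # (a - 1) # rev (sorted_list_of_set D))"
proof -
  have fin: "finite D" using assms finite_subset by auto
  note L = list_set_dec[OF fin]
  let ?R = "rev (sorted_list_of_set D)"
  have lst: "last ((a + 1) # a # (a - 1) # ?R) \<ge> 2"
  proof (cases "?R = []")
    case True then show ?thesis using assms by simp
  next
    case False
    then have "last ?R \<in> D" using L(2) last_in_set by metis
    then show ?thesis using False assms by auto
  qed
  have bd: "\<forall>x\<in>set ?R. x \<le> a - 2" using assms L(2) by auto
  have so: "sorted_wrt (>) ((a + 1) # a # (a - 1) # ?R)"
    using L(1) bd assms by auto
  have su: "sum_list ((a + 1) # a # (a - 1) # ?R) = n" using L(3) assms by simp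
  show ?thesis unfolding butterfly_def using so su lst assms by simp
qed


lemma card_butterfly_BX: "card {p. butterfly n p \<and> P (p!1)} = card (BX P n)"
proof (rule bij_betw_same_card)
  show "bij_betw (\<lambda>p. (p!1, set (drop 3 p))) {p. butterfly n p \<and> P (p!1)} (BX P n)"
  proof (rule bij_betw_byWitness[where f' = "\<lambda>(a, D). (a + 1) # a # (a - 1) # rev (sorted_list_of_set D)"])
    show "\<forall>p\<in>{p. butterfly n p \<and> P (p!1)}. (\<lambda>(a, D). (a + 1) # a # (a - 1) # rev (sorted_list_of_set D)) (p!1, set (drop 3 p)) = p"
    proof
      fix p assume "p \<in> {p. butterfly n p \<and> P (p!1)}"
      then have b: "butterfly n p" by simp
      note st = butterfly_struct[OF b]
      show "(\<lambda>(a, D). (a + 1) # a # (a - 1) # rev (sorted_list_of_set D)) (p!1, set (drop 3 p)) = p"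
      proof -
        have "(\<lambda>(a, D). (a + 1) # a # (a - 1) # rev (sorted_list_of_set D)) (p!1, set (drop 3 p))
           = (p!1 + 1) # p!1 # (p!1 - 1) # drop 3 p" using dec_set_list[OF st(5)] by simp
        also have "\<dots> = p" by (rule st(1)[symmetric])
        finally show ?thesis .
      qed
    qed
    show "\<forall>y\<in>BX P n. (\<lambda>p. (p!1, set (drop 3 p))) ((\<lambda>(a, D). (a + 1) # a # (a - 1) # rev (sorted_list_of_set D)) y) = y"
    proof
      fix y assume "y \<in> BX P n"
      then obtain a D where y: "y = (a, D)" "D \<subseteq> {2..a-2}" unfolding BX_def by auto
      then have "finite D" using finite_subset by auto
      then show "(\<lambda>p. (p!1, set (drop 3 p))) ((\<lambda>(a, D). (a + 1) # a # (a - 1) # rev (sorted_list_of_set D)) y) = y"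
        using y list_set_dec by simp
    qed
    show "(\<lambda>p. (p!1, set (drop 3 p))) ` {p. butterfly n p \<and> P (p!1)} \<subseteq> BX P n"
    proof
      fix y assume "y \<in> (\<lambda>p. (p!1, set (drop 3 p))) ` {p. butterfly n p \<and> P (p!1)}"
      then obtain p where y: "y = (p!1, set (drop 3 p))" "butterfly n p" "P (p!1)" by auto
      note st = butterfly_struct[OF y(2)]
      have "sum_list (drop 3 p) = \<Sum>(set (drop 3 p))"
        using dec_distinct[OF st(5)] sum_list_distinct_conv_sum_set[of _ "\<lambda>x. x"] by simp
      moreover have "set (drop 3 p) \<subseteq> {2..p!1-2}" using st(4) by auto
      ultimately show "y \<in> BX P n" unfolding BX_def using y(1,3) st(2,6) by simp
    qed
    show "(\<lambda>(a, D). (a + 1) # a # (a - 1) # rev (sorted_list_of_set D)) ` BX P n \<subseteq> {p. butterfly n p \<and> P (p!1)}"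
    proof
      fix p assume "p \<in> (\<lambda>(a, D). (a + 1) # a # (a - 1) # rev (sorted_list_of_set D)) ` BX P n"
      then obtain a D where p: "p = (a + 1) # a # (a - 1) # rev (sorted_list_of_set D)"
        "a \<ge> 3" "P a" "D \<subseteq> {2..a-2}" "3 * a + \<Sum>D = n" unfolding BX_def by auto
      show "p \<in> {p. butterfly n p \<and> P (p!1)}" using butterfly_build[OF p(2,4,5)] p(1,3) by simp
    qed
  qed
qed


definition declist :: "nat multiset \<Rightarrow> nat list" where
  "declist M = rev (sorted_list_of_multiset M)"

lemma declist_props:
  "mset (declist M) = M" "set (declist M) = set_mset M" "sorted_wrt (\<ge>) (declist M)"
  "sum_list (declist M) = sum_mset M"
proof -
  show m: "mset (declist M) = M" unfolding declist_def by simp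
  show "set (declist M) = set_mset M" unfolding declist_def by simp
  show "sorted_wrt (\<ge>) (declist M)" unfolding declist_def
    using sorted_sorted_list_of_multiset[of M] by (simp add: sorted_wrt_rev)
  show "sum_list (declist M) = sum_mset M" using m by (metis sum_mset_sum_list)
qed

lemma declist_mset: "sorted_wrt (\<ge>) (R::nat list) \<Longrightarrow> declist (mset R) = R"
proof -
  assume "sorted_wrt (\<ge>) R"
  then have "sorted (rev R)" by (simp add: sorted_wrt_rev)
  then have "sort (rev R) = rev R" by (rule sorted_sort_id)
  then have "sorted_list_of_multiset (mset R) = rev R"
    by (metis mset_rev sorted_list_of_multiset_mset)
  then show ?thesis unfolding declist_def by simp
qed

lemma mult_in_cons3:
  assumes "k \<le> length L"
  shows "mult_in (a # b # c # L) 4 (3 + k) x = count (mset (take k L)) x"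
proof -
  have "{j. 4 \<le> j \<and> j \<le> 3 + k \<and> (a # b # c # L) ! (j - 1) = x} = (\<lambda>i. i + 4) ` {i. i < k \<and> L ! i = x}"
  proof (intro equalityI subsetI)
    fix j assume "j \<in> {j. 4 \<le> j \<and> j \<le> 3 + k \<and> (a # b # c # L) ! (j - 1) = x}"
    then have j: "4 \<le> j" "j \<le> 3 + k" "(a # b # c # L) ! (j - 1) = x" by auto
    have "j - 1 = Suc (Suc (Suc (j - 4)))" using j(1) by arith
    then have "L ! (j - 4) = x" using j(3) by simp
    moreover have "j - 4 < k" using j by simp
    ultimately show "j \<in> (\<lambda>i. i + 4) ` {i. i < k \<and> L ! i = x}" using j(1)
      by (intro image_eqI[where x = "j - 4"]) auto
  next
    fix j assume "j \<in> (\<lambda>i. i + 4) ` {i. i < k \<and> L ! i = x}"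
    then obtain i where "j = i + 4" "i < k" "L ! i = x" by auto
    then show "j \<in> {j. 4 \<le> j \<and> j \<le> 3 + k \<and> (a # b # c # L) ! (j - 1) = x}"
      by (simp add: numeral_3_eq_3 eval_nat_numeral)
  qed
  then have "mult_in (a # b # c # L) 4 (3 + k) x = card {i. i < k \<and> L ! i = x}"
    unfolding mult_in_def by (simp add: card_image inj_on_def)
  also have "\<dots> = card {i. i < length (take k L) \<and> x = take k L ! i}"
    using assms by (intro arg_cong[where f = card]) auto
  also have "\<dots> = count (mset (take k L)) x"
    by (simp add: count_mset count_list_eq_length_filter length_filter_conv_card)
  finally show ?thesis .
qed

lemma pi2_pos: "c > 0 \<Longrightarrow> pi2 c \<ge> 1"
  by (metis one_le_power pi2_ex one_le_numeral)

lemma goodM_le: "goodM B M \<Longrightarrow> x \<in># M \<Longrightarrow> x \<le> B"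
proof -
  assume g: "goodM B M" and x: "x \<in># M"
  then have c: "count M x > 0" by simp
  then have "x * pi2 (count M x) \<le> B" using g unfolding goodM_def by blast
  moreover have "x \<le> x * pi2 (count M x)" using pi2_pos[OF c] by simp
  ultimately show ?thesis by linarith
qed

definition nonone :: "nat multiset \<Rightarrow> nat multiset" where
  "nonone M = filter_mset (\<lambda>x. x \<noteq> 1) M"

lemma nonone_split: "M = nonone M + replicate_mset (count M 1) 1"
  by (rule multiset_eqI) (simp add: nonone_def)

lemma count_nonone: "count (nonone M) x = (if x = 1 then 0 else count M x)"
  by (simp add: nonone_def)


lemma shape3:
  assumes "length qs \<ge> 3"
  obtains q1 q2 q3 rest where "qs = q1 # q2 # q3 # rest"
proof -
  obtain q1 t1 where t1: "qs = q1 # t1" using assms by (cases qs) auto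
  obtain q2 t2 where t2: "t1 = q2 # t2" using assms t1 by (cases t1) auto
  obtain q3 t3 where t3: "t2 = q3 # t3" using assms t1 t2 by (cases t2) auto
  show ?thesis using that t1 t2 t3 by blast
qed

lemma shape4:
  assumes "length qs \<ge> 4" "last qs = (3::nat)"
  obtains q1 q2 q3 R where "qs = q1 # q2 # q3 # R @ [3]"
proof -
  obtain q1 q2 q3 rest where qs: "qs = q1 # q2 # q3 # rest"
    using assms(1) shape3[of qs] by force
  have ne: "rest \<noteq> []" using assms(1) qs by auto
  have "last rest = 3" using assms(2) qs ne by simp
  then have "rest = butlast rest @ [3]" using ne append_butlast_last_id[OF ne] by simp
  then show ?thesis using that qs by blast
qed

lemma oe_char:
  assumes qs: "qs = q1 # q2 # q3 # R @ [3]"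
  shows "oe_part n qs \<longleftrightarrow>
    sorted_wrt (\<ge>) qs \<and> sum_list qs = n \<and> (\<forall>x\<in>set qs. odd x \<and> x \<ge> 3) \<and> q2 = q3 \<and>
    (q3 > (R @ [3]) ! 0 \<or> (q2 = 3 \<and> q3 = 3 \<and> (R @ [3]) ! 0 = 3)) \<and>
    ((q1 - q2) div 2 > 0 \<longrightarrow> 2 * pi2 ((q1 - q2) div 2) \<le> q3 - 1) \<and>
    (\<forall>x. odd x \<and> x \<noteq> 3 \<and> count (mset (R @ [3])) x > 0 \<longrightarrow> x * pi2 (count (mset (R @ [3])) x) \<le> q3 - 1) \<and>
    (count (mset R) 3 > 0 \<longrightarrow> 3 * pi2 (count (mset R) 3) \<le> q3 - 1)"
proof -
  have len: "length qs = 3 + length (R @ [3])" using qs by simp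
  have m1: "mult_in qs 4 (length qs) x = count (mset (R @ [3])) x" for x
  proof -
    have "mult_in qs 4 (3 + length (R @ [3])) x = count (mset (take (length (R @ [3])) (R @ [3]))) x"
      unfolding qs by (rule mult_in_cons3) simp
    then show ?thesis unfolding len by simp
  qed
  have len2: "length qs - 1 = 3 + length R" using qs by simp
  have m2: "mult_in qs 4 (length qs - 1) x = count (mset R) x" for x
  proof -
    have "mult_in qs 4 (3 + length R) x = count (mset (take (length R) (R @ [3]))) x"
      unfolding qs by (rule mult_in_cons3) simp
    then show ?thesis unfolding len2 by simp
  qed
  have e: "qs ! 0 = q1" "qs ! 1 = q2" "qs ! 2 = q3" "qs ! 3 = (R @ [3]) ! 0" "length qs \<ge> 4" "last qs = 3"
    using qs by auto
  show ?thesis unfolding oe_part_def Let_def m1 m2 e(1-4,6) using e(5) by blast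
qed

definition oe_phi :: "nat list \<Rightarrow> nat \<times> nat multiset" where
  "oe_phi qs = (qs ! 1 + 1, mset (butlast (drop 3 qs)) + replicate_mset (qs ! 0 - qs ! 1) 1)"

definition oe_psi :: "nat \<times> nat multiset \<Rightarrow> nat list" where
  "oe_psi p = (case p of (a, M) \<Rightarrow> (a - 1 + count M 1) # (a - 1) # (a - 1) # declist (nonone M) @ [3])"

lemma oe_fwd:
  assumes oe: "oe_part n qs"
  shows "oe_phi qs \<in> BY even n \<and> oe_psi (oe_phi qs) = qs"
proof -
  have "length qs \<ge> 4" "last qs = 3" using oe unfolding oe_part_def Let_def by auto
  then obtain q1 q2 q3 R where qs: "qs = q1 # q2 # q3 # R @ [3]" by (rule shape4)
  note C = oe_char[OF qs, THEN iffD1, OF oe]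
  have so: "sorted_wrt (\<ge>) qs" and su: "sum_list qs = n" and od: "\<forall>x\<in>set qs. odd x \<and> x \<ge> 3"
    and q23: "q2 = q3"
    and T: "(q1 - q2) div 2 > 0 \<longrightarrow> 2 * pi2 ((q1 - q2) div 2) \<le> q3 - 1"
    and U: "\<forall>x. odd x \<and> x \<noteq> 3 \<and> count (mset (R @ [3])) x > 0 \<longrightarrow> x * pi2 (count (mset (R @ [3])) x) \<le> q3 - 1"
    and V: "count (mset R) 3 > 0 \<longrightarrow> 3 * pi2 (count (mset R) 3) \<le> q3 - 1"
    using C by blast+
  have q12: "q2 \<le> q1" using so qs by simp
  have oq: "odd q1" "odd q2" "q2 \<ge> 3" using od qs by auto
  have odR: "\<forall>x\<in>set R. odd x \<and> x \<ge> 3" using od qs by auto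
  have odR1: "odd x" if "x \<in> set R" for x using odR that by blast
  have odR2: "x \<ge> 3" if "x \<in> set R" for x using odR that by blast
  have soR: "sorted_wrt (\<ge>) R" using so qs by (simp add: sorted_wrt_append)
  define M where "M = mset R + replicate_mset (q1 - q2) 1"
  define a where "a = q2 + 1"
  have phi: "oe_phi qs = (a, M)" unfolding oe_phi_def M_def a_def qs by simp
  have n1R: "1 \<notin> set R"
  proof
    assume "1 \<in> set R"
    from odR2[OF this] show False by simp
  qed
  then have c1R: "count (mset R) 1 = 0" by (simp add: count_mset_0_iff)
  have cM1: "count M 1 = q1 - q2" unfolding M_def using c1R by simp
  have cMx: "count M x = count (mset R) x" if "x \<noteq> 1" for x unfolding M_def using that by simp
  have ev: "even (q1 - q2)" using oq q12 by presburger
  have good: "goodM (a - 2) M"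
    unfolding goodM_def
  proof (intro conjI allI impI ballI)
    fix x assume "x \<in># M"
    then have "x \<in># mset R \<or> x \<in># replicate_mset (q1 - q2) 1" unfolding M_def by simp
    then have "x \<in> set R \<or> x = 1" by (meson in_replicate_mset in_multiset_in_set)
    then show "odd x"
    proof
      assume "x \<in> set R" then show "odd x" by (rule odR1)
    next
      assume "x = 1" then show "odd x" by simp
    qed
  next
    show "even (count M 1)" using cM1 ev by simp
  next
    fix x assume pos: "0 < count M x"
    show "x * pi2 (count M x) \<le> a - 2"
    proof (cases "x = 1")
      case True
      define t where "t = (q1 - q2) div 2"
      have ct: "count M 1 = 2 * t" unfolding t_def cM1 using ev by simp
      then have "t > 0" using pos True by simp
      then have "2 * pi2 t \<le> q3 - 1" using T unfolding t_def by blast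
      then show ?thesis using True ct pi2_double[OF \<open>t > 0\<close>] q23 unfolding a_def by simp
    next
      case False
      then have c: "count M x = count (mset R) x" by (rule cMx)
      then have "count (mset R) x \<noteq> 0" using pos by simp
      then have "x \<in> set R" by simp
      then have ox: "odd x" by (rule odR1)
      show ?thesis
      proof (cases "x = 3")
        case True
        then show ?thesis using V c pos q23 unfolding a_def by simp
      next
        case False
        then have "count (mset (R @ [3])) x = count (mset R) x" by simp
        then show ?thesis using U ox False c pos q23 unfolding a_def by simp
      qed
    qed
  qed
  have sumM: "sum_mset M = sum_list R + (q1 - q2)" unfolding M_def by (simp add: sum_mset_sum_list)
  have "3 * a + sum_mset M = n" using su qs q12 q23 sumM unfolding a_def by simp
  moreover have "a \<ge> 3" "even a" using oq unfolding a_def by auto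
  ultimately have inBY: "(a, M) \<in> BY even n" unfolding BY_def using good by simp
  have nM: "nonone M = mset R"
  proof -
    from n1R show ?thesis by (intro multiset_eqI) (simp add: count_nonone M_def)
  qed
  have "oe_psi (a, M) = qs"
    unfolding oe_psi_def using nM declist_mset[OF soR] cM1 q12 q23 qs unfolding a_def by simp
  then show ?thesis using phi inBY by simp
qed

lemma nonone_facts:
  assumes g: "goodM B M"
  shows "\<And>x. x \<in># nonone M \<Longrightarrow> odd x \<and> 3 \<le> x \<and> x \<le> B"
proof -
  fix x assume x: "x \<in># nonone M"
  then have xM: "x \<in># M" and x1: "x \<noteq> 1" by (auto simp: nonone_def)
  have ox: "odd x" using g xM unfolding goodM_def by blast
  have "x \<noteq> 0" using ox by (cases x) auto
  then have "3 \<le> x" using ox x1 by presburger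
  moreover have "x \<le> B" using goodM_le[OF g xM] .
  ultimately show "odd x \<and> 3 \<le> x \<and> x \<le> B" using ox by blast
qed

lemma oe_bwd:
  assumes inBY: "(a, M) \<in> BY even n"
  shows "oe_part n (oe_psi (a, M)) \<and> oe_phi (oe_psi (a, M)) = (a, M)"
proof -
  have a3: "a \<ge> 3" and ea: "even a" and g: "goodM (a - 2) M" and sn: "3 * a + sum_mset M = n"
    using inBY unfolding BY_def by auto
  have a4: "a \<ge> 4" using a3 ea by presburger
  define c where "c = count M 1"
  define N where "N = nonone M"
  define L where "L = declist N"
  define qs where "qs = (a - 1 + c) # (a - 1) # (a - 1) # L @ [3]"
  have qsdef: "oe_psi (a, M) = qs" unfolding qs_def L_def N_def c_def oe_psi_def by simp
  have ec: "even c" using g unfolding goodM_def c_def by blast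
  have NF: "odd x \<and> 3 \<le> x \<and> x \<le> a - 2" if "x \<in> set L" for x
    using nonone_facts[OF g] that unfolding L_def N_def declist_props by blast
  have soL: "sorted_wrt (\<ge>) L" unfolding L_def by (rule declist_props)
  have mL: "mset L = N" unfolding L_def by (rule declist_props)
  have sL: "sum_list L = sum_mset N" unfolding L_def by (rule declist_props)
  have Msplit: "M = N + replicate_mset c 1" unfolding N_def c_def by (rule nonone_split)
  have cN: "count N x = (if x = 1 then 0 else count M x)" for x unfolding N_def by (rule count_nonone)
  have so: "sorted_wrt (\<ge>) qs"
  proof -
    have NFa: "\<forall>x\<in>set L. 3 \<le> x \<and> x \<le> a - 2" using NF by blast
    then have "\<forall>x\<in>set L. x \<le> a - 1 \<and> x \<le> a - 1 + c" by auto
    then show ?thesis unfolding qs_def using soL NFa a4 by (auto simp: sorted_wrt_append)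
  qed
  have su: "sum_list qs = n"
  proof -
    have "sum_mset M = sum_mset N + c" by (subst Msplit) simp
    then show ?thesis unfolding qs_def using sL sn a4 by simp
  qed
  have od: "\<forall>x\<in>set qs. odd x \<and> x \<ge> 3"
  proof
    fix x assume "x \<in> set qs"
    then have "x = a - 1 + c \<or> x = a - 1 \<or> x \<in> set L \<or> x = 3" unfolding qs_def by auto
    moreover have "odd (a - 1 + c)" "odd (a - 1)" using ea ec a4 by presburger+
    ultimately show "odd x \<and> x \<ge> 3" using NF a4 by auto
  qed
  have q4: "a - 1 > (L @ [3]) ! 0 \<or> (a - 1 = 3 \<and> a - 1 = 3 \<and> (L @ [3]) ! 0 = 3)"
  proof (cases L)
    case Nil
    then show ?thesis using a4 by auto
  next
    case (Cons y ys)
    then have "y \<in> set L" by simp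
    then have "y \<le> a - 2" using NF by blast
    then have "y < a - 1" using a4 by linarith
    then show ?thesis using Cons by simp
  qed
  have T: "((a - 1 + c) - (a - 1)) div 2 > 0 \<longrightarrow> 2 * pi2 (((a - 1 + c) - (a - 1)) div 2) \<le> (a - 1) - 1"
  proof
    assume "((a - 1 + c) - (a - 1)) div 2 > 0"
    then have t: "c div 2 > 0" by simp
    have cc: "c = 2 * (c div 2)" using ec by simp
    then have "c > 0" using t by linarith
    then have "1 * pi2 c \<le> a - 2" using g unfolding goodM_def c_def by blast
    then show "2 * pi2 (((a - 1 + c) - (a - 1)) div 2) \<le> (a - 1) - 1"
      using pi2_double[OF t] cc by simp
  qed
  have U: "\<forall>x. odd x \<and> x \<noteq> 3 \<and> count (mset (L @ [3])) x > 0 \<longrightarrow> x * pi2 (count (mset (L @ [3])) x) \<le> (a - 1) - 1"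
  proof (intro allI impI)
    fix x assume x: "odd x \<and> x \<noteq> 3 \<and> count (mset (L @ [3])) x > 0"
    have x3: "x \<noteq> 3" and pos: "count (mset (L @ [3])) x > 0" using x by auto
    have e0: "count (mset (L @ [3])) x = count N x" using x3 mL by simp
    have x1: "x \<noteq> 1"
    proof
      assume "x = 1"
      then have "count N x = 0" using cN by simp
      with e0 pos show False by simp
    qed
    have e: "count (mset (L @ [3])) x = count M x" using e0 cN x1 by simp
    have pos': "0 < count M x" using pos e by linarith
    have "x * pi2 (count M x) \<le> a - 2" using g pos' unfolding goodM_def by blast
    then show "x * pi2 (count (mset (L @ [3])) x) \<le> (a - 1) - 1" using e by simp
  qed
  have V: "count (mset L) 3 > 0 \<longrightarrow> 3 * pi2 (count (mset L) 3) \<le> (a - 1) - 1"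
  proof
    assume "count (mset L) 3 > 0"
    moreover have "count (mset L) 3 = count M 3" using mL cN by simp
    ultimately have "0 < count M 3" "count (mset L) 3 = count M 3" by simp_all
    moreover have "0 < count M 3 \<longrightarrow> 3 * pi2 (count M 3) \<le> a - 2" using g unfolding goodM_def by blast
    ultimately show "3 * pi2 (count (mset L) 3) \<le> (a - 1) - 1" by simp
  qed
  have oe: "oe_part n qs"
    using oe_char[OF qs_def, of n] so su od q4 T U V by blast
  have "oe_phi qs = (a, M)"
  proof -
    have "oe_phi qs = (a - 1 + 1, mset L + replicate_mset c 1)" unfolding oe_phi_def qs_def by simp
    also have "\<dots> = (a, M)" using a4 mL Msplit by simp
    finally show ?thesis .
  qed
  then show ?thesis using oe qsdef by simp
qed

lemma card_oe: "card {qs. oe_part n qs} = card (BY even n)"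
proof (rule bij_betw_same_card)
  show "bij_betw oe_phi {qs. oe_part n qs} (BY even n)"
  proof (rule bij_betw_byWitness[where f' = oe_psi])
    show "\<forall>a\<in>{qs. oe_part n qs}. oe_psi (oe_phi a) = a" using oe_fwd by blast
    show "\<forall>a'\<in>BY even n. oe_phi (oe_psi a') = a'" using oe_bwd by auto
    show "oe_phi ` {qs. oe_part n qs} \<subseteq> BY even n" using oe_fwd by blast
    show "oe_psi ` BY even n \<subseteq> {qs. oe_part n qs}" using oe_bwd by auto
  qed
qed


lemma oo_char:
  assumes qs: "qs = q1 # q2 # q3 # R"
  shows "oo_part n qs \<longleftrightarrow> (qs = [3, 3, 3] \<and> n = 9) \<or>
    (sum_list qs = n \<and> (\<forall>x\<in>set qs. odd x \<and> x \<ge> 3) \<and> q1 > q2 \<and> q2 \<ge> 2 \<and> q3 = q2 - 2 \<and>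
    sorted_wrt (\<ge>) (q3 # R) \<and> q1 - q2 \<ge> 2 \<and>
    ((q1 - q2 - 2) div 2 > 0 \<longrightarrow> 2 * pi2 ((q1 - q2 - 2) div 2) \<le> q3) \<and>
    (\<forall>x. odd x \<and> x \<noteq> 3 \<and> count (mset R) x > 0 \<longrightarrow> x * pi2 (count (mset R) x) \<le> q3) \<and>
    (count (mset R) 3 > 0 \<longrightarrow> 3 * pi2 (count (mset R) 3) \<le> q3))"
proof -
  have len: "length qs = 3 + length R" using qs by simp
  have m1: "mult_in qs 4 (length qs) x = count (mset R) x" for x
  proof -
    have "mult_in qs 4 (3 + length R) x = count (mset (take (length R) R)) x"
      unfolding qs by (rule mult_in_cons3) simp
    then show ?thesis unfolding len by simp
  qed
  have e: "qs ! 0 = q1" "qs ! 1 = q2" "qs ! 2 = q3" "drop 2 qs = q3 # R" "length qs \<ge> 3"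
    using qs by auto
  show ?thesis unfolding oo_part_def Let_def m1 e(1-4) using e(5) by blast
qed

definition oo_phi :: "nat list \<Rightarrow> nat \<times> nat multiset" where
  "oo_phi qs = (if qs = [3, 3, 3] then (3, {#}) else
     (qs ! 1, mset (drop 3 qs) + replicate_mset (qs ! 0 - qs ! 1 - 2) 1))"

definition oo_psi :: "nat \<times> nat multiset \<Rightarrow> nat list" where
  "oo_psi p = (case p of (a, M) \<Rightarrow> if a = 3 then [3, 3, 3] else
     (a + 2 + count M 1) # a # (a - 2) # declist (nonone M))"

lemma goodM_empty: "goodM B {#}" unfolding goodM_def by simp

lemma oo_fwd:
  assumes oo: "oo_part n qs"
  shows "oo_phi qs \<in> BY odd n \<and> oo_psi (oo_phi qs) = qs"
proof (cases "qs = [3, 3, 3] \<and> n = 9")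
  case True
  then have "oo_phi qs = (3, {#})" unfolding oo_phi_def by simp
  moreover have "(3, {#}) \<in> BY odd n" unfolding BY_def using True goodM_empty by simp
  moreover have "oo_psi (3, {#}) = qs" unfolding oo_psi_def using True by simp
  ultimately show ?thesis by simp
next
  case False
  have "length qs \<ge> 3" using oo False unfolding oo_part_def Let_def by blast
  then obtain q1 q2 q3 R where qs: "qs = q1 # q2 # q3 # R" by (rule shape3)
  have C: "sum_list qs = n \<and> (\<forall>x\<in>set qs. odd x \<and> x \<ge> 3) \<and> q1 > q2 \<and> q2 \<ge> 2 \<and> q3 = q2 - 2 \<and>
    sorted_wrt (\<ge>) (q3 # R) \<and> q1 - q2 \<ge> 2 \<and>
    ((q1 - q2 - 2) div 2 > 0 \<longrightarrow> 2 * pi2 ((q1 - q2 - 2) div 2) \<le> q3) \<and>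
    (\<forall>x. odd x \<and> x \<noteq> 3 \<and> count (mset R) x > 0 \<longrightarrow> x * pi2 (count (mset R) x) \<le> q3) \<and>
    (count (mset R) 3 > 0 \<longrightarrow> 3 * pi2 (count (mset R) 3) \<le> q3)"
    using oe_char oo_char[OF qs, of n] oo False by blast
  have su: "sum_list qs = n" and od: "\<forall>x\<in>set qs. odd x \<and> x \<ge> 3"
    and q12: "q1 > q2" "q2 \<ge> 2" "q1 - q2 \<ge> 2" and q3: "q3 = q2 - 2"
    and so: "sorted_wrt (\<ge>) (q3 # R)"
    and T: "(q1 - q2 - 2) div 2 > 0 \<longrightarrow> 2 * pi2 ((q1 - q2 - 2) div 2) \<le> q3"
    and U: "\<forall>x. odd x \<and> x \<noteq> 3 \<and> count (mset R) x > 0 \<longrightarrow> x * pi2 (count (mset R) x) \<le> q3"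
    and V: "count (mset R) 3 > 0 \<longrightarrow> 3 * pi2 (count (mset R) 3) \<le> q3"
    using C by blast+
  have oq: "odd q1" "odd q2" "q3 \<ge> 3" using od qs by auto
  have odR1: "odd x" if "x \<in> set R" for x using od qs that by auto
  have odR2: "x \<ge> 3" if "x \<in> set R" for x using od qs that by auto
  have soR: "sorted_wrt (\<ge>) R" using so by simp
  have n1R: "1 \<notin> set R"
  proof
    assume "1 \<in> set R"
    from odR2[OF this] show False by simp
  qed
  then have c1R: "count (mset R) 1 = 0" by simp
  define M where "M = mset R + replicate_mset (q1 - q2 - 2) 1"
  define a where "a = q2"
  have ne: "qs \<noteq> [3, 3, 3]" using qs q3 q12 by auto
  have phi: "oo_phi qs = (a, M)" unfolding oo_phi_def M_def a_def using ne by (simp add: qs)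
  have cM1: "count M 1 = q1 - q2 - 2" unfolding M_def using c1R by simp
  have cMx: "count M x = count (mset R) x" if "x \<noteq> 1" for x unfolding M_def using that by simp
  have ev: "even (q1 - q2 - 2)" using oq q12 by presburger
  have good: "goodM (a - 2) M"
    unfolding goodM_def
  proof (intro conjI allI impI ballI)
    fix x assume "x \<in># M"
    then have "x \<in># mset R \<or> x \<in># replicate_mset (q1 - q2 - 2) 1" unfolding M_def by simp
    then have "x \<in> set R \<or> x = 1" by (meson in_replicate_mset in_multiset_in_set)
    then show "odd x"
    proof
      assume "x \<in> set R" then show "odd x" by (rule odR1)
    next
      assume "x = 1" then show "odd x" by simp
    qed
  next
    show "even (count M 1)" using cM1 ev by simp
  next
    fix x assume pos: "0 < count M x"
    show "x * pi2 (count M x) \<le> a - 2"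
    proof (cases "x = 1")
      case True
      define t where "t = (q1 - q2 - 2) div 2"
      have ct: "count M 1 = 2 * t" unfolding t_def cM1 using ev by simp
      then have "t > 0" using pos True by simp
      then have "2 * pi2 t \<le> q3" using T unfolding t_def by blast
      then show ?thesis using True ct pi2_double[OF \<open>t > 0\<close>] q3 unfolding a_def by simp
    next
      case False
      then have c: "count M x = count (mset R) x" by (rule cMx)
      then have "count (mset R) x \<noteq> 0" using pos by simp
      then have "x \<in> set R" by simp
      then have ox: "odd x" by (rule odR1)
      show ?thesis
      proof (cases "x = 3")
        case True
        then show ?thesis using V c pos q3 unfolding a_def by simp
      next
        case False
        then show ?thesis using U ox False c pos q3 unfolding a_def by simp
      qed
    qed
  qed
  have sumM: "sum_mset M = sum_list R + (q1 - q2 - 2)" unfolding M_def by (simp add: sum_mset_sum_list)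
  have "3 * a + sum_mset M = n" using su qs q12 q3 sumM unfolding a_def by simp
  moreover have "a \<ge> 3" "odd a" using oq q3 unfolding a_def by auto
  ultimately have inBY: "(a, M) \<in> BY odd n" unfolding BY_def using good by simp
  have nM: "nonone M = mset R"
    using n1R by (intro multiset_eqI) (simp add: count_nonone M_def)
  have a3: "a \<noteq> 3" using oq q3 unfolding a_def by simp
  have "oo_psi (a, M) = qs"
    unfolding oo_psi_def using a3 nM declist_mset[OF soR] cM1 q12 q3 qs unfolding a_def by simp
  then show ?thesis using phi inBY by simp
qed

lemma pi2_ge2: "c \<ge> 2 \<Longrightarrow> pi2 c \<ge> 2"
proof -
  assume c: "c \<ge> 2"
  then obtain k where k: "pi2 c = 2 ^ k" "2 ^ k \<le> c" "c < 2 ^ (k + 1)" using pi2_ex[of c] by auto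
  have "k \<noteq> 0" using k c by (cases k) auto
  then have "(2::nat) ^ 1 \<le> 2 ^ k" by (intro power_increasing) auto
  then show ?thesis using k by simp
qed

lemma goodM1_empty:
  assumes g: "goodM 1 M"
  shows "M = {#}"
proof (rule ccontr)
  assume "M \<noteq> {#}"
  then obtain x where x: "x \<in># M" by (metis multiset_nonemptyE)
  have ox: "odd x" using g x unfolding goodM_def by blast
  have "x \<le> 1" using goodM_le[OF g x] .
  then have x1: "x = 1" using ox by (cases x) auto
  then have pos: "count M 1 > 0" using x by simp
  have "even (count M 1)" using g unfolding goodM_def by blast
  then have "count M 1 \<ge> 2" using pos by presburger
  then have "pi2 (count M 1) \<ge> 2" by (rule pi2_ge2)
  moreover have "1 * pi2 (count M 1) \<le> 1" using g pos unfolding goodM_def by blast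
  ultimately show False by simp
qed

lemma oo_bwd:
  assumes inBY: "(a, M) \<in> BY odd n"
  shows "oo_part n (oo_psi (a, M)) \<and> oo_phi (oo_psi (a, M)) = (a, M)"
proof -
  have a3: "a \<ge> 3" and oa: "odd a" and g: "goodM (a - 2) M" and sn: "3 * a + sum_mset M = n"
    using inBY unfolding BY_def by auto
  show ?thesis
  proof (cases "a = 3")
    case True
    then have "goodM 1 M" using g by simp
    then have M: "M = {#}" by (rule goodM1_empty)
    then have n9: "n = 9" using sn True by simp
    have "oo_psi (a, M) = [3, 3, 3]" unfolding oo_psi_def using True by simp
    moreover have "oo_part n [3, 3, 3]" unfolding oo_part_def using n9 by simp
    moreover have "oo_phi [3, 3, 3] = (a, M)" unfolding oo_phi_def using True M by simp
    ultimately show ?thesis by simp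
  next
    case False
    then have a5: "a \<ge> 5" using a3 oa by presburger
    define c where "c = count M 1"
    define N where "N = nonone M"
    define L where "L = declist N"
    define qs where "qs = (a + 2 + c) # a # (a - 2) # L"
    have qsdef: "oo_psi (a, M) = qs" unfolding qs_def L_def N_def c_def oo_psi_def using False by simp
    have ec: "even c" using g unfolding goodM_def c_def by blast
    have NF: "odd x \<and> 3 \<le> x \<and> x \<le> a - 2" if "x \<in> set L" for x
      using nonone_facts[OF g] that unfolding L_def N_def declist_props by blast
    have soL: "sorted_wrt (\<ge>) L" unfolding L_def by (rule declist_props)
    have mL: "mset L = N" unfolding L_def by (rule declist_props)
    have sL: "sum_list L = sum_mset N" unfolding L_def by (rule declist_props)
    have Msplit: "M = N + replicate_mset c 1" unfolding N_def c_def by (rule nonone_split)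
    have cN: "count N x = (if x = 1 then 0 else count M x)" for x unfolding N_def by (rule count_nonone)
    have so: "sorted_wrt (\<ge>) ((a - 2) # L)"
    proof -
      have NFa: "\<forall>x\<in>set L. 3 \<le> x \<and> x \<le> a - 2" using NF by blast
      then show ?thesis using soL by auto
    qed
    have su: "sum_list qs = n"
    proof -
      have "sum_mset M = sum_mset N + c" by (subst Msplit) simp
      then show ?thesis unfolding qs_def using sL sn a5 by simp
    qed
    have od: "\<forall>x\<in>set qs. odd x \<and> x \<ge> 3"
    proof
      fix x assume "x \<in> set qs"
      then have "x = a + 2 + c \<or> x = a \<or> x = a - 2 \<or> x \<in> set L" unfolding qs_def by auto
      moreover have "odd (a + 2 + c)" "odd (a - 2)" using oa ec a5 by presburger+
      ultimately show "odd x \<and> x \<ge> 3" using NF a5 oa by auto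
    qed
    have T: "((a + 2 + c) - a - 2) div 2 > 0 \<longrightarrow> 2 * pi2 (((a + 2 + c) - a - 2) div 2) \<le> a - 2"
    proof
      assume "((a + 2 + c) - a - 2) div 2 > 0"
      then have t: "c div 2 > 0" by simp
      have cc: "c = 2 * (c div 2)" using ec by simp
      then have "c > 0" using t by linarith
      then have "1 * pi2 c \<le> a - 2" using g unfolding goodM_def c_def by blast
      then show "2 * pi2 (((a + 2 + c) - a - 2) div 2) \<le> a - 2"
        using pi2_double[OF t] cc by simp
    qed
    have U: "\<forall>x. odd x \<and> x \<noteq> 3 \<and> count (mset L) x > 0 \<longrightarrow> x * pi2 (count (mset L) x) \<le> a - 2"
    proof (intro allI impI)
      fix x assume x: "odd x \<and> x \<noteq> 3 \<and> count (mset L) x > 0"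
      have pos: "count (mset L) x > 0" using x by auto
      have e0: "count (mset L) x = count N x" using mL by simp
      have x1: "x \<noteq> 1"
      proof
        assume "x = 1"
        then have "count N x = 0" using cN by simp
        with e0 pos show False by simp
      qed
      have e: "count (mset L) x = count M x" using e0 cN x1 by simp
      have pos': "0 < count M x" using pos e by linarith
      have "x * pi2 (count M x) \<le> a - 2" using g pos' unfolding goodM_def by blast
      then show "x * pi2 (count (mset L) x) \<le> a - 2" using e by simp
    qed
    have V: "count (mset L) 3 > 0 \<longrightarrow> 3 * pi2 (count (mset L) 3) \<le> a - 2"
    proof
      assume "count (mset L) 3 > 0"
      moreover have "count (mset L) 3 = count M 3" using mL cN by simp
      ultimately have "0 < count M 3" "count (mset L) 3 = count M 3" by simp_all
      moreover have "0 < count M 3 \<longrightarrow> 3 * pi2 (count M 3) \<le> a - 2" using g unfolding goodM_def by blast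
      ultimately show "3 * pi2 (count (mset L) 3) \<le> a - 2" by simp
    qed
    have oo: "oo_part n qs"
      using oo_char[OF qs_def, of n] su od so T U V a5 by simp
    have ne: "qs \<noteq> [3, 3, 3]" unfolding qs_def using False by simp
    have "oo_phi qs = (a, M)"
    proof -
      have "oo_phi qs = (a, mset L + replicate_mset c 1)" unfolding oo_phi_def using ne by (simp add: qs_def)
      also have "\<dots> = (a, M)" using mL Msplit by simp
      finally show ?thesis .
    qed
    then show ?thesis using oo qsdef by simp
  qed
qed

lemma card_oo: "card {qs. oo_part n qs} = card (BY odd n)"
proof (rule bij_betw_same_card)
  show "bij_betw oo_phi {qs. oo_part n qs} (BY odd n)"
  proof (rule bij_betw_byWitness[where f' = oo_psi])
    show "\<forall>a\<in>{qs. oo_part n qs}. oo_psi (oo_phi a) = a" using oo_fwd by blast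
    show "\<forall>a'\<in>BY odd n. oo_phi (oo_psi a') = a'" using oo_bwd by auto
    show "oo_phi ` {qs. oo_part n qs} \<subseteq> BY odd n" using oo_fwd by blast
    show "oo_psi ` BY odd n \<subseteq> {qs. oo_part n qs}" using oo_bwd by auto
  qed
qed


definition Qs :: "nat \<Rightarrow> nat list set" where
  "Qs m = {xs. sorted_wrt (>) xs \<and> 0 \<notin> set xs \<and> sum_list xs = m}"

definition DP :: "nat \<Rightarrow> nat list set" where
  "DP m = {xs. sorted_wrt (>) xs \<and> (\<forall>x\<in>set xs. 2 \<le> x) \<and> sum_list xs = m}"

definition W :: "nat \<Rightarrow> nat list set" where
  "W m = {xs \<in> DP m. length xs \<ge> 2 \<and> xs ! 0 = xs ! 1 + 1}"

definition R1 :: "nat \<Rightarrow> nat list set" where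
  "R1 m = {xs \<in> DP m. xs \<noteq> [] \<and> \<not> (length xs \<ge> 2 \<and> xs ! 0 = xs ! 1 + 1)}"

definition R2 :: "nat \<Rightarrow> nat list set" where
  "R2 m = {xs \<in> W m. \<not> (length xs \<ge> 3 \<and> xs ! 1 = xs ! 2 + 1)}"

lemma finite_Qs: "finite (Qs m)"
proof -
  have "Qs m \<subseteq> {xs. set xs \<subseteq> {0..m} \<and> length xs \<le> Suc m}"
  proof
    fix xs assume "xs \<in> Qs m"
    then have s: "sorted_wrt (>) xs" "sum_list xs = m" unfolding Qs_def by auto
    have sub: "set xs \<subseteq> {0..m}" using member_le_sum_list[of _ xs] s(2) by auto
    have "distinct xs" using dec_distinct[OF s(1)] .
    then have "length xs = card (set xs)" by (simp add: distinct_card)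
    also have "\<dots> \<le> card {0..m}" using sub by (intro card_mono) auto
    finally show "xs \<in> {xs. set xs \<subseteq> {0..m} \<and> length xs \<le> Suc m}" using sub by simp
  qed
  then show ?thesis using finite_lists_length_le[of "{0..m}" "Suc m"] finite_subset by blast
qed

lemma DP_sub_Qs: "DP m \<subseteq> Qs m"
  unfolding DP_def Qs_def by force

lemma finite_DP: "finite (DP m)"
  using finite_subset[OF DP_sub_Qs finite_Qs] .

lemma qd_Qs: "qd m = card (Qs m)"
  unfolding qd_def Qs_def by simp

lemma card_Qs: 
  assumes "m \<ge> 1"
  shows "card (Qs m) = card (DP m) + card (DP (m - 1))"
proof -
  define B where "B = {xs \<in> Qs m. 1 \<in> set xs}"
  have QU: "Qs m = DP m \<union> B"
  proof (intro equalityI subsetI)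
    fix xs assume xs: "xs \<in> Qs m"
    show "xs \<in> DP m \<union> B"
    proof (cases "1 \<in> set xs")
      case True then show ?thesis using xs unfolding B_def by simp
    next
      case False
      have "\<forall>x\<in>set xs. 2 \<le> x"
      proof
        fix x assume "x \<in> set xs"
        have x0: "0 \<notin> set xs" using xs unfolding Qs_def by simp
        have "x \<noteq> 0"
        proof
          assume "x = 0" with \<open>x \<in> set xs\<close> x0 show False by simp
        qed
        moreover have "x \<noteq> 1"
        proof
          assume "x = 1" with \<open>x \<in> set xs\<close> False show False by simp
        qed
        ultimately show "2 \<le> x" by linarith
      qed
      then show ?thesis using xs unfolding Qs_def DP_def by simp
    qed
  next
    fix xs assume "xs \<in> DP m \<union> B"
    then show "xs \<in> Qs m" using DP_sub_Qs unfolding B_def by auto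
  qed
  have disj: "DP m \<inter> B = {}" unfolding DP_def B_def by force
  have finB: "finite B" unfolding B_def using finite_Qs by simp
  have "card (Qs m) = card (DP m) + card B"
    unfolding QU using disj finB finite_DP by (simp add: card_Un_disjoint)
  moreover have "card B = card (DP (m - 1))"
  proof (rule bij_betw_same_card)
    show "bij_betw butlast B (DP (m - 1))"
    proof (rule bij_betw_byWitness[where f' = "\<lambda>q. q @ [1]"])
      have shapeB: "xs = butlast xs @ [1] \<and> butlast xs \<in> DP (m - 1)" if xsB: "xs \<in> B" for xs
      proof -
        have s: "sorted_wrt (>) xs" "0 \<notin> set xs" "sum_list xs = m" "1 \<in> set xs"
          using xsB unfolding B_def Qs_def by auto
        have ne: "xs \<noteq> []" using s(4) by auto
        have "last xs \<le> 1" using sorted_dec_last[OF s(1) s(4)] .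
        moreover have "last xs \<noteq> 0" using s(2) ne last_in_set by metis
        ultimately have l1: "last xs = 1" by simp
        have e: "xs = butlast xs @ [1]" using append_butlast_last_id[OF ne] l1 by simp
        have sb: "sorted_wrt (>) (butlast xs @ [1])" using s(1) e by simp
        then have sb1: "sorted_wrt (>) (butlast xs)" "\<forall>x\<in>set (butlast xs). 1 < x"
          by (auto simp: sorted_wrt_append)
        have "sum_list (butlast xs) + 1 = m" proof -
          have "sum_list xs = sum_list (butlast xs @ [1])" using e by simp
          then show ?thesis using s(3) by simp
        qed
        then have "sum_list (butlast xs) = m - 1" by simp
        moreover have "\<forall>x\<in>set (butlast xs). 2 \<le> x" using sb1(2) by auto
        ultimately show ?thesis using e sb1(1) unfolding DP_def by simp
      qed
      show "\<forall>a\<in>B. butlast a @ [1] = a" using shapeB by metis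
      show "\<forall>a'\<in>DP (m - 1). butlast (a' @ [1]) = a'" by simp
      show "butlast ` B \<subseteq> DP (m - 1)" using shapeB by blast
      show "(\<lambda>q. q @ [1]) ` DP (m - 1) \<subseteq> B"
      proof
        fix ys assume "ys \<in> (\<lambda>q. q @ [1]) ` DP (m - 1)"
        then obtain q where q: "ys = q @ [1]" "q \<in> DP (m - 1)" by auto
        then have s: "sorted_wrt (>) q" "\<forall>x\<in>set q. 2 \<le> x" "sum_list q = m - 1" unfolding DP_def by auto
        have "sorted_wrt (>) (q @ [1])" using s(1,2) by (auto simp: sorted_wrt_append)
        moreover have "0 \<notin> set (q @ [1])" using s(2) by auto
        moreover have "sum_list (q @ [1]) = m" using s(3) assms by simp
        ultimately show "ys \<in> B" unfolding B_def Qs_def q by simp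
      qed
    qed
  qed
  ultimately show ?thesis by simp
qed

lemma dec_hd_max: "sorted_wrt (>) ((t0::nat) # t) \<Longrightarrow> z \<in> set (t0 # t) \<Longrightarrow> z \<le> t0"
  by auto

lemma DP_nonempty: "xs \<in> DP m \<Longrightarrow> m \<ge> 1 \<Longrightarrow> xs \<noteq> []"
  unfolding DP_def by auto

lemma card_DP_split:
  assumes "m \<ge> 1"
  shows "card (DP m) = card (R1 m) + card (W m)"
proof -
  have U: "DP m = R1 m \<union> W m" unfolding R1_def W_def using DP_nonempty[OF _ assms] by blast
  have D: "R1 m \<inter> W m = {}" unfolding R1_def W_def by blast
  have f1: "finite (R1 m)" "finite (W m)" unfolding R1_def W_def using finite_DP by auto
  show ?thesis unfolding U using D f1 by (simp add: card_Un_disjoint)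
qed

lemma card_R1:
  assumes m3: "m \<ge> 3"
  shows "card (R1 m) = card (DP (m - 1))"
proof (rule bij_betw_same_card)
  show "bij_betw (\<lambda>p. (hd p - 1) # tl p) (R1 m) (DP (m - 1))"
  proof (rule bij_betw_byWitness[where f' = "\<lambda>q. (hd q + 1) # tl q"])
    have fwd: "(hd p - 1) # tl p \<in> DP (m - 1) \<and> (hd ((hd p - 1) # tl p) + 1) # tl ((hd p - 1) # tl p) = p"
      if pR: "p \<in> R1 m" for p
    proof -
      have ne: "p \<noteq> []" using pR unfolding R1_def by simp
      then obtain x t where p: "p = x # t" by (cases p) auto
      have s: "sorted_wrt (>) (x # t)" "\<forall>z\<in>set (x # t). 2 \<le> z" "sum_list (x # t) = m"
        "\<not> (length (x # t) \<ge> 2 \<and> (x # t) ! 0 = (x # t) ! 1 + 1)"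
        using pR unfolding R1_def DP_def p by auto
      have key: "x - 1 \<ge> 2 \<and> (\<forall>z\<in>set t. z < x - 1)"
      proof (cases t)
        case Nil
        then show ?thesis using s m3 by simp
      next
        case (Cons t0 t')
        have "x > t0" using s(1) Cons by simp
        moreover have "x \<noteq> t0 + 1" using s(4) Cons by simp
        ultimately have xt: "x \<ge> t0 + 2" by simp
        have "t0 \<ge> 2" using s(2) Cons by simp
        moreover have "\<forall>z\<in>set t. z \<le> t0" using dec_hd_max[of t0 t'] s(1) Cons by simp
        ultimately show ?thesis using xt by fastforce
      qed
      have x1: "x \<ge> 1" using key by linarith
      have "sorted_wrt (>) ((x - 1) # t)" using s(1) key by simp
      moreover have "\<forall>z\<in>set ((x - 1) # t). 2 \<le> z" using s(2) key by simp
      moreover have "sum_list ((x - 1) # t) = m - 1" using s(3) x1 by simp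
      ultimately show ?thesis unfolding DP_def p using x1 by simp
    qed
    have bwd: "(hd q + 1) # tl q \<in> R1 m \<and> (hd ((hd q + 1) # tl q) - 1) # tl ((hd q + 1) # tl q) = q"
      if qD: "q \<in> DP (m - 1)" for q
    proof -
      have ne: "q \<noteq> []" using DP_nonempty[OF qD] m3 by simp
      then obtain y t where q: "q = y # t" by (cases q) auto
      have s: "sorted_wrt (>) (y # t)" "\<forall>z\<in>set (y # t). 2 \<le> z" "sum_list (y # t) = m - 1"
        using qD unfolding DP_def q by auto
      have "sorted_wrt (>) ((y + 1) # t)" using s(1) by auto
      moreover have "\<forall>z\<in>set ((y + 1) # t). 2 \<le> z" using s(2) by simp
      moreover have "sum_list ((y + 1) # t) = m" using s(3) m3 by simp
      moreover have "\<not> (length ((y + 1) # t) \<ge> 2 \<and> ((y + 1) # t) ! 0 = ((y + 1) # t) ! 1 + 1)"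
      proof (cases t)
        case Nil then show ?thesis by simp
      next
        case (Cons t0 t') then show ?thesis using s(1) by simp
      qed
      ultimately show ?thesis unfolding R1_def DP_def q by simp
    qed
    show "\<forall>a\<in>R1 m. (hd ((hd a - 1) # tl a) + 1) # tl ((hd a - 1) # tl a) = a" using fwd by blast
    show "\<forall>a'\<in>DP (m - 1). (hd ((hd a' + 1) # tl a') - 1) # tl ((hd a' + 1) # tl a') = a'" using bwd by blast
    show "(\<lambda>p. (hd p - 1) # tl p) ` R1 m \<subseteq> DP (m - 1)" using fwd by blast
    show "(\<lambda>q. (hd q + 1) # tl q) ` DP (m - 1) \<subseteq> R1 m" using bwd by blast
  qed
qed

lemma Bt_eq: "{p. butterfly n p} = {xs \<in> W n. length xs \<ge> 3 \<and> xs ! 1 = xs ! 2 + 1}"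
proof (intro equalityI subsetI)
  fix p assume "p \<in> {p. butterfly n p}"
  then have b: "butterfly n p" by simp
  then have s: "sorted_wrt (>) p" "length p \<ge> 3" "sum_list p = n" "p!0 = p!1 + 1" "p!1 = p!2 + 1" "last p \<ge> 2"
    unfolding butterfly_def by auto
  have "\<forall>x\<in>set p. 2 \<le> x" using sorted_dec_last[OF s(1)] s(6) by fastforce
  then show "p \<in> {xs \<in> W n. length xs \<ge> 3 \<and> xs ! 1 = xs ! 2 + 1}"
    unfolding W_def DP_def using s by simp
next
  fix p assume "p \<in> {xs \<in> W n. length xs \<ge> 3 \<and> xs ! 1 = xs ! 2 + 1}"
  then have s: "sorted_wrt (>) p" "\<forall>x\<in>set p. 2 \<le> x" "sum_list p = n" "length p \<ge> 3"
    "p!0 = p!1 + 1" "p!1 = p!2 + 1" unfolding W_def DP_def by auto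
  have "p \<noteq> []" using s(4) by auto
  then have "last p \<in> set p" by simp
  then have "last p \<ge> 2" using s(2) by blast
  then show "p \<in> {p. butterfly n p}" unfolding butterfly_def using s by simp
qed

lemma card_W_split: "card (W n) = card (R2 n) + card {p. butterfly n p}"
proof -
  have U: "W n = R2 n \<union> {xs \<in> W n. length xs \<ge> 3 \<and> xs ! 1 = xs ! 2 + 1}" unfolding R2_def by blast
  have D: "R2 n \<inter> {xs \<in> W n. length xs \<ge> 3 \<and> xs ! 1 = xs ! 2 + 1} = {}" unfolding R2_def by blast
  have fW: "finite (W n)" unfolding W_def using finite_DP by auto
  have f1: "finite (R2 n)" "finite {xs \<in> W n. length xs \<ge> 3 \<and> xs ! 1 = xs ! 2 + 1}"
    unfolding R2_def using fW by auto
  have "card (R2 n \<union> {xs \<in> W n. length xs \<ge> 3 \<and> xs ! 1 = xs ! 2 + 1}) =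
      card (R2 n) + card {xs \<in> W n. length xs \<ge> 3 \<and> xs ! 1 = xs ! 2 + 1}"
    by (rule card_Un_disjoint[OF f1 D])
  then show ?thesis unfolding Bt_eq using U by simp
qed

lemma card_R2:
  assumes n6: "n \<ge> 6"
  shows "card (R2 n) = card (W (n - 2))"
proof (rule bij_betw_same_card)
  let ?f = "\<lambda>p. (p ! 0 - 1) # (p ! 1 - 1) # drop 2 p"
  let ?g = "\<lambda>q. (q ! 0 + 1) # (q ! 1 + 1) # drop 2 q"
  show "bij_betw ?f (R2 n) (W (n - 2))"
  proof (rule bij_betw_byWitness[where f' = ?g])
    have fwd: "?f p \<in> W (n - 2) \<and> ?g (?f p) = p" if pR: "p \<in> R2 n" for p
    proof -
      have l2: "length p \<ge> 2" using pR unfolding R2_def W_def by simp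
      then obtain x y t where p: "p = x # y # t"
        by (metis Suc_le_length_iff numeral_2_eq_2)
      have s: "sorted_wrt (>) (x # y # t)" "\<forall>z\<in>set (x # y # t). 2 \<le> z" "sum_list (x # y # t) = n"
        "x = y + 1" "\<not> (length (x # y # t) \<ge> 3 \<and> y = t ! 0 + 1)"
        using pR unfolding R2_def W_def DP_def p by auto
      have key: "y \<ge> 3 \<and> (\<forall>z\<in>set t. z < y - 1)"
      proof (cases t)
        case Nil
        then have "2 * y + 1 = n" using s(3,4) by simp
        then show ?thesis using Nil n6 by simp
      next
        case (Cons t0 t')
        have "y > t0" using s(1) Cons by simp
        moreover have "y \<noteq> t0 + 1" using s(5) Cons by simp
        ultimately have yt: "y \<ge> t0 + 2" by simp
        have "t0 \<ge> 2" using s(2) Cons by simp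
        moreover have "\<forall>z\<in>set t. z \<le> t0" using dec_hd_max[of t0 t'] s(1) Cons by simp
        ultimately show ?thesis using yt by fastforce
      qed
      have fp: "?f p = y # (y - 1) # t" using p s(4) by simp
      have "sorted_wrt (>) (y # (y - 1) # t)" using s(1) key by auto
      moreover have "\<forall>z\<in>set (y # (y - 1) # t). 2 \<le> z" using s(2) key by auto
      moreover have "sum_list (y # (y - 1) # t) = n - 2" using s(3,4) key by simp
      ultimately have "?f p \<in> W (n - 2)" unfolding fp W_def DP_def using key by simp
      moreover have "?g (y # (y - 1) # t) = p" using p s(4) key by simp
      ultimately show ?thesis using fp by simp
    qed
    have bwd: "?g q \<in> R2 n \<and> ?f (?g q) = q" if qW: "q \<in> W (n - 2)" for q
    proof -
      have l2: "length q \<ge> 2" using qW unfolding W_def by simp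
      then obtain y z t where q: "q = y # z # t"
        by (metis Suc_le_length_iff numeral_2_eq_2)
      have s: "sorted_wrt (>) (y # z # t)" "\<forall>w\<in>set (y # z # t). 2 \<le> w" "sum_list (y # z # t) = n - 2"
        "y = z + 1"
        using qW unfolding W_def DP_def q by auto
      have gq: "?g q = (z + 2) # (z + 1) # t" using q s(4) by simp
      have "sorted_wrt (>) ((z + 2) # (z + 1) # t)" using s(1) by auto
      moreover have "\<forall>w\<in>set ((z + 2) # (z + 1) # t). 2 \<le> w" using s(2) by auto
      moreover have "sum_list ((z + 2) # (z + 1) # t) = n" using s(3,4) n6 by simp
      moreover have "\<not> (length ((z + 2) # (z + 1) # t) \<ge> 3 \<and> ((z + 2) # (z + 1) # t) ! 1 = ((z + 2) # (z + 1) # t) ! 2 + 1)"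
      proof (cases t)
        case Nil then show ?thesis by simp
      next
        case (Cons t0 t') then show ?thesis using s(1) by simp
      qed
      ultimately have "?g q \<in> R2 n" unfolding gq R2_def W_def DP_def by simp
      moreover have "?f ((z + 2) # (z + 1) # t) = q" using q s(4) by simp
      ultimately show ?thesis using gq by simp
    qed
    show "\<forall>a\<in>R2 n. ?g (?f a) = a" using fwd by blast
    show "\<forall>a'\<in>W (n - 2). ?f (?g a') = a'" using bwd by blast
    show "?f ` R2 n \<subseteq> W (n - 2)" using fwd by blast
    show "?g ` W (n - 2) \<subseteq> R2 n" using bwd by blast
  qed
qed

lemma card_s_e_s_o: "s_e n + s_o n = card {p. butterfly n p}"
proof -
  have U: "{p. butterfly n p} = {p. butterfly n p \<and> even (p!1)} \<union> {p. butterfly n p \<and> odd (p!1)}" by blast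
  have D: "{p. butterfly n p \<and> even (p!1)} \<inter> {p. butterfly n p \<and> odd (p!1)} = {}" by blast
  have fB: "finite {p. butterfly n p}" unfolding Bt_eq W_def using finite_DP by auto
  have f1: "finite {p. butterfly n p \<and> even (p!1)}" "finite {p. butterfly n p \<and> odd (p!1)}"
    using finite_subset[OF _ fB] by auto
  have "card ({p. butterfly n p \<and> even (p!1)} \<union> {p. butterfly n p \<and> odd (p!1)}) =
     card {p. butterfly n p \<and> even (p!1)} + card {p. butterfly n p \<and> odd (p!1)}"
    by (rule card_Un_disjoint[OF f1 D])
  then have "card {p. butterfly n p} = card {p. butterfly n p \<and> even (p!1)} + card {p. butterfly n p \<and> odd (p!1)}"
    by (subst U)
  then show ?thesis unfolding s_e_def s_o_def by simp
qed

lemma part_c: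
  assumes n6: "n \<ge> 6"
  shows "int (s_e n + s_o n) = s n"
proof -
  define D where "D m = int (card (DP m))" for m
  have q: "int (qd m) = D m + D (m - 1)" if "m \<ge> 1" for m
    unfolding D_def qd_Qs using card_Qs[OF that] by simp
  have Wc: "int (card (W m)) = D m - D (m - 1)" if "m \<ge> 3" for m
    unfolding D_def using card_DP_split[of m] card_R1[OF that] that by simp
  have B: "int (s_e n + s_o n) = int (card (W n)) - int (card (W (n - 2)))"
    using card_s_e_s_o[of n] card_W_split[of n] card_R2[OF n6] by simp
  have "int (s_e n + s_o n) = (D n - D (n - 1)) - (D (n - 2) - D (n - 2 - 1))"
    using B Wc[of n] Wc[of "n - 2"] n6 by simp
  moreover have "s n = (D n + D (n - 1)) - 2 * (D (n - 1) + D (n - 1 - 1)) + (D (n - 2) + D (n - 2 - 1))"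
    unfolding s_def using q[of n] q[of "n - 1"] q[of "n - 2"] n6 by simp
  moreover have "n - 1 - 1 = n - 2" by simp
  ultimately show ?thesis by simp
qed


theorem proposition3p4:
  fixes n :: nat
  assumes "n \<ge> 6"
  shows "o_e n = s_e n \<and> o_o n = s_o n \<and> int (o_e n) + int (o_o n) = s n"
proof -
  have a: "o_e n = s_e n"
  proof -
    have "o_e n = card (BY even n)" unfolding o_e_def by (rule card_oe)
    also have "\<dots> = card (BX even n)" by (rule card_BX_BY[symmetric])
    also have "\<dots> = card {p. butterfly n p \<and> even (p!1)}"
      using card_butterfly_BX[where P = "\<lambda>a. even a" and n = n] by simp
    finally show ?thesis unfolding s_e_def .
  qed
  have b: "o_o n = s_o n"
  proof -
    have "o_o n = card (BY odd n)" unfolding o_o_def by (rule card_oo)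
    also have "\<dots> = card (BX odd n)" by (rule card_BX_BY[symmetric])
    also have "\<dots> = card {p. butterfly n p \<and> odd (p!1)}"
      using card_butterfly_BX[where P = "\<lambda>a. odd a" and n = n] by simp
    finally show ?thesis unfolding s_o_def .
  qed
  have c: "int (o_e n) + int (o_o n) = s n" using part_c[OF assms] a b by simp
  show ?thesis using a b c by simp
qed

end
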